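(* There exists a (necessarily discontinuous) map $f:[0,1]\to[0,1]$ such that the chain components poset $(\mathfrak{C}_f,\preceq)$ is order isomorphic to $([0,1)\cap\mathbb{Q},\le)$.
   Context: No regularity is assumed on maps. For a map $f:[0,1]\to[0,1]$ with the usual metric: an $\varepsilon$-chain from $x$ to $y$ is a finite sequence $x_0=x,\dots,x_n=y$, $n\ge1$, with $|f(x_i)-x_{i+1}|<\varepsilon$; $x\,\mathcal{C}\,y$ iff for every $\varepsilon>0$ there is an $\varepsilon$-chain from $x$ to $y$; $CR_f=\{x:x\,\mathcal{C}\,x\}$; $x\,E\,y$ iff $x\,\mathcal{C}\,y$ and $y\,\mathcal{C}\,x$; $\mathfrak{C}_f=CR_f/E$ is the set of chain components, partially ordered by $[x]\preceq[y]$ iff $y\,\mathcal{C}\,x$. *)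

theory Defs
  imports "HOL-Analysis.Analysis"
begin

text \<open>Maps f : [0,1] -> [0,1] are modelled as f :: real => real with f ` {0..1} \<subseteq> {0..1};
  no regularity is assumed. All chain points lie in [0,1].\<close>

definition eps_chain :: "(real \<Rightarrow> real) \<Rightarrow> real \<Rightarrow> real \<Rightarrow> real \<Rightarrow> bool" where
  "eps_chain f \<epsilon> x y \<longleftrightarrow>
     (\<exists>n::nat. \<exists>xs::nat \<Rightarrow> real. n \<ge> 1 \<and> xs 0 = x \<and> xs n = y \<and>
        (\<forall>i\<le>n. xs i \<in> {0..1}) \<and> (\<forall>i<n. \<bar>f (xs i) - xs (Suc i)\<bar> < \<epsilon>))"

definition chain_rel :: "(real \<Rightarrow> real) \<Rightarrow> real \<Rightarrow> real \<Rightarrow> bool" where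
  "chain_rel f x y \<longleftrightarrow> (\<forall>\<epsilon>>0. eps_chain f \<epsilon> x y)"

definition chain_recurrent :: "(real \<Rightarrow> real) \<Rightarrow> real set" where
  "chain_recurrent f = {x \<in> {0..1}. chain_rel f x x}"

definition chain_equiv :: "(real \<Rightarrow> real) \<Rightarrow> real \<Rightarrow> real \<Rightarrow> bool" where
  "chain_equiv f x y \<longleftrightarrow> chain_rel f x y \<and> chain_rel f y x"

definition chain_components :: "(real \<Rightarrow> real) \<Rightarrow> real set set" where
  "chain_components f =
     (\<lambda>x. {y \<in> chain_recurrent f. chain_equiv f x y}) ` chain_recurrent f"

text \<open>[x] \<preceq> [y] iff y C x (independent of representatives).\<close>
definition comp_le :: "(real \<Rightarrow> real) \<Rightarrow> real set \<Rightarrow> real set \<Rightarrow> bool" where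
  "comp_le f A B \<longleftrightarrow> (\<exists>x\<in>A. \<exists>y\<in>B. chain_rel f y x)"

end

theory Submission
  imports Defs "HOL-Library.Countable" "HOL-Library.Nat_Bijection"
begin

definition Q0 :: "rat set" where "Q0 = {q. 0 \<le> q \<and> q < 1}"

definition wt :: "rat \<Rightarrow> real" where "wt q = (1/2) ^ (to_nat q + 2)"

definition aa :: "rat \<Rightarrow> nat \<Rightarrow> real" where
  "aa q n = (if 0 \<le> (from_nat n :: rat) \<and> from_nat n < q then (1/2::real) ^ (n+2) else 0)"

definition hh :: "rat \<Rightarrow> real" where "hh q = suminf (aa q)"

lemma geo_sums: "(\<lambda>n. (1/2::real) ^ (n+2)) sums (1/2)"
proof -
  have "(\<lambda>n. (1/2) * (1/2::real)^Suc n) sums ((1/2) * 1)"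
    by (rule sums_mult[OF power_half_series])
  then show ?thesis by (simp add: power_add)
qed

lemma aa_nonneg: "0 \<le> aa q n" by (simp add: aa_def)
lemma aa_le: "aa q n \<le> (1/2::real) ^ (n+2)" by (simp add: aa_def)

lemma aa_summable: "summable (aa q)"
  by (rule summable_comparison_test'[OF sums_summable[OF geo_sums]]) (auto simp: aa_def)

lemma hh_nonneg: "0 \<le> hh q"
  unfolding hh_def by (rule suminf_nonneg[OF aa_summable aa_nonneg])

lemma hh_le: "hh q \<le> 1/2"
proof -
  have "hh q \<le> (\<Sum>n. (1/2::real) ^ (n+2))"
    unfolding hh_def by (rule suminf_le[OF aa_le aa_summable sums_summable[OF geo_sums]])
  also have "\<dots> = 1/2" using geo_sums sums_unique by metis
  finally show ?thesis .
qed

lemma hh_zero: "hh 0 = 0"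
proof -
  have "aa 0 = (\<lambda>n. 0)" by (rule ext) (auto simp: aa_def)
  then show ?thesis by (simp add: hh_def)
qed

lemma wt_pos: "0 < wt q" by (simp add: wt_def)
lemma wt_le: "wt q \<le> 1/4"
proof -
  have "(1/2::real) ^ (to_nat q + 2) \<le> (1/2)^2"
    by (rule power_decreasing) auto
  then show ?thesis by (simp add: wt_def power2_eq_square)
qed

lemma hh_gap:
  assumes "0 \<le> q" "q < q'"
  shows "hh q + wt q \<le> hh q'"
proof -
  let ?d = "\<lambda>n. aa q' n - aa q n"
  have sd: "summable ?d" by (intro summable_diff aa_summable)
  have nn: "\<And>n. 0 \<le> ?d n" using assms by (auto simp: aa_def)
  have "hh q' - hh q = suminf ?d" unfolding hh_def by (rule suminf_diff[OF aa_summable aa_summable])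
  moreover have "sum ?d {to_nat q} \<le> suminf ?d"
    by (rule sum_le_suminf[OF sd]) (use nn in auto)
  moreover have "?d (to_nat q) = wt q" using assms by (simp add: aa_def wt_def)
  ultimately show ?thesis by simp
qed

lemma hh_mono: "0 \<le> q \<Longrightarrow> q \<le> q' \<Longrightarrow> hh q \<le> hh q'"
  using hh_gap[of q q'] wt_pos[of q] by (cases "q = q'") auto

definition sel :: "rat \<Rightarrow> real \<Rightarrow> rat" where
  "sel q d = (let r = (from_nat (fst (prod_decode (nat \<lfloor>1/d\<rfloor>))) :: rat)
              in if r \<in> Q0 \<and> r \<le> q then r else 0)"

definition ingap :: "rat \<Rightarrow> real \<Rightarrow> bool" where
  "ingap q t \<longleftrightarrow> q \<in> Q0 \<and> hh q < t \<and> t < hh q + wt q"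

definition gapq :: "real \<Rightarrow> rat" where "gapq t = (SOME q. ingap q t)"

definition ff :: "real \<Rightarrow> real" where
  "ff t = (if t \<in> hh ` Q0 then t
           else if (\<exists>q. ingap q t) then hh (sel (gapq t) (t - hh (gapq t))) else 0)"

lemma Q0_0: "(0::rat) \<in> Q0" by (simp add: Q0_def)

lemma sel_Q0: "sel q d \<in> Q0" by (simp add: sel_def Let_def Q0_0)
lemma sel_le: "0 \<le> q \<Longrightarrow> sel q d \<le> q" by (simp add: sel_def Let_def)

lemma hh_less: "q \<in> Q0 \<Longrightarrow> q < q' \<Longrightarrow> hh q < hh q'"
  using hh_gap[of q q'] wt_pos[of q] by (auto simp: Q0_def)

lemma hh_inj: "inj_on hh Q0"
  proof (rule inj_onI)
  fix x y assume "x \<in> Q0" "y \<in> Q0" "hh x = hh y"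
  then show "x = y" using hh_less[of x y] hh_less[of y x] by (cases x y rule: linorder_cases) auto
qed

lemma ingap_unique: "ingap q t \<Longrightarrow> ingap q' t \<Longrightarrow> q = q'"
proof (rule ccontr)
  assume a: "ingap q t" "ingap q' t" "q \<noteq> q'"
  show False
  proof (cases "q < q'")
    case True
    then have "hh q + wt q \<le> hh q'" using a hh_gap by (auto simp: ingap_def Q0_def)
    then show False using a by (auto simp: ingap_def)
  next
    case False
    then have "q' < q" using a(3) by simp
    then have "hh q' + wt q' \<le> hh q" using a hh_gap by (auto simp: ingap_def Q0_def)
    then show False using a by (auto simp: ingap_def)
  qed
qed

lemma ingap_not_hh: "ingap q t \<Longrightarrow> r \<in> Q0 \<Longrightarrow> t \<noteq> hh r"
proof
  assume a: "ingap q t" "r \<in> Q0" "t = hh r"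
  show False
  proof (cases "r \<le> q")
    case True
    then have "hh r \<le> hh q" using a hh_mono by (auto simp: Q0_def)
    then show False using a by (auto simp: ingap_def)
  next
    case False
    then have "hh q + wt q \<le> hh r" using a hh_gap by (auto simp: ingap_def Q0_def)
    then show False using a by (auto simp: ingap_def)
  qed
qed

lemma gapq_eq: "ingap q t \<Longrightarrow> gapq t = q"
  unfolding gapq_def by (metis ingap_unique someI)

lemma ff_gap: "ingap q t \<Longrightarrow> ff t = hh (sel q (t - hh q))"
  unfolding ff_def using ingap_not_hh gapq_eq by auto

lemma ff_hh: "q \<in> Q0 \<Longrightarrow> ff (hh q) = hh q" by (simp add: ff_def)

lemma ff_else: "t \<notin> hh ` Q0 \<Longrightarrow> \<not> (\<exists>q. ingap q t) \<Longrightarrow> ff t = 0"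
  by (simp add: ff_def)

lemma ff_range: "0 \<le> t \<Longrightarrow> t \<le> 1 \<Longrightarrow> 0 \<le> ff t \<and> ff t \<le> 1"
proof -
  assume "0 \<le> t" "t \<le> 1"
  then show ?thesis
  proof (cases "t \<in> hh ` Q0")
    case False
    show ?thesis
    proof (cases "\<exists>q. ingap q t")
      case True
      then obtain q where "ingap q t" by blast
      then show ?thesis using ff_gap hh_nonneg hh_le[of "sel q (t - hh q)"] by simp
    qed (use False ff_else in auto)
  qed (auto simp: ff_def)
qed

lemma barrier_pt:
  assumes r: "r \<in> Q0" and t: "t < hh r + wt r"
  shows "ff t \<le> hh r"
proof (cases "t \<in> hh ` Q0")
  case True
  then obtain q where q: "q \<in> Q0" "t = hh q" by blast
  show ?thesis
  proof (cases "q \<le> r")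
    case True then show ?thesis using q r hh_mono by (auto simp: ff_hh Q0_def)
  next
    case False
    then have "hh r + wt r \<le> hh q" using hh_gap r by (auto simp: Q0_def)
    then show ?thesis using t q by simp
  qed
next
  case False
  show ?thesis
  proof (cases "\<exists>q. ingap q t")
    case True
    then obtain q where g: "ingap q t" by blast
    have q0: "0 \<le> q" using g by (simp add: ingap_def Q0_def)
    show ?thesis
    proof (cases "q \<le> r")
      case True
      have "sel q (t - hh q) \<le> r" using sel_le[OF q0] True by (meson order.trans)
      then show ?thesis using ff_gap[OF g] hh_mono sel_Q0 by (simp add: Q0_def)
    next
      case False
      then have "hh r + wt r \<le> hh q" using hh_gap r by (auto simp: Q0_def)
      then show ?thesis using t g by (simp add: ingap_def)
    qed
  next
    case False2: False
    then show ?thesis using ff_else[OF False False2] hh_nonneg by simp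
  qed
qed


lemma barrier_chain:
  assumes r: "r \<in> Q0" and e: "0 < e" "e \<le> wt r"
    and ch: "\<forall>i<n. \<bar>ff (xs i) - xs (Suc i)\<bar> < e"
    and start: "xs j < hh r + e"
  shows "j \<le> i \<Longrightarrow> i \<le> n \<Longrightarrow> xs i < hh r + e"
proof (induction i)
  case 0 then show ?case using start by simp
next
  case (Suc i)
  show ?case
  proof (cases "j = Suc i")
    case True then show ?thesis using start by simp
  next
    case False
    then have ih: "xs i < hh r + e" using Suc by simp
    have "ff (xs i) \<le> hh r" using barrier_pt[OF r] ih e by simp
    moreover have "\<bar>ff (xs i) - xs (Suc i)\<bar> < e" using ch Suc by simp
    ultimately show ?thesis by simp
  qed
qed

lemma hh_in: "0 \<le> hh q \<and> hh q \<le> 1" using hh_nonneg[of q] hh_le[of q] by simp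

lemma no_up:
  assumes q: "q \<in> Q0" and q': "q' \<in> Q0" and lt: "q < q'"
  shows "\<not> chain_rel ff (hh q) (hh q')"
proof
  assume "chain_rel ff (hh q) (hh q')"
  then have "eps_chain ff (wt q) (hh q) (hh q')" using wt_pos by (simp add: chain_rel_def)
  then obtain n xs where c: "xs 0 = hh q" "xs n = hh q'"
      "\<forall>i<n. \<bar>ff (xs i) - xs (Suc i)\<bar> < wt q"
    unfolding eps_chain_def by blast
  have "xs n < hh q + wt q"
    by (rule barrier_chain[OF q wt_pos order.refl c(3), of 0]) (use c(1) wt_pos[of q] in auto)
  moreover have "hh q + wt q \<le> hh q'" using hh_gap q lt by (simp add: Q0_def)
  ultimately show False using c(2) by simp
qed

lemma pos_below:
  assumes t: "0 \<le> t" "t \<notin> hh ` Q0"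
  shows "\<exists>r\<in>Q0. ff t \<le> hh r \<and> hh r < t"
proof (cases "\<exists>q. ingap q t")
  case True
  then obtain q where g: "ingap q t" by blast
  then have "hh (sel q (t - hh q)) \<le> hh q" using hh_mono sel_le sel_Q0
    by (simp add: ingap_def Q0_def)
  then show ?thesis using ff_gap[OF g] g by (auto simp: ingap_def)
next
  case False
  have "t \<noteq> 0" using t Q0_0 hh_zero by force
  then show ?thesis using ff_else[OF t(2) False] t Q0_0 hh_zero by (intro bexI[of _ 0]) auto
qed

lemma not_rec:
  assumes t: "0 \<le> t" "t \<notin> hh ` Q0"
  shows "\<not> chain_rel ff t t"
proof
  assume cr: "chain_rel ff t t"
  obtain r where r: "r \<in> Q0" "ff t \<le> hh r" "hh r < t" using pos_below[OF t] by blast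
  define e where "e = min (wt r) (t - hh r)"
  have e: "0 < e" "e \<le> wt r" "e \<le> t - hh r" using wt_pos[of r] r by (auto simp: e_def)
  then have "eps_chain ff e t t" using cr by (simp add: chain_rel_def)
  then obtain n xs where c: "n \<ge> 1" "xs 0 = t" "xs n = t"
      "\<forall>i<n. \<bar>ff (xs i) - xs (Suc i)\<bar> < e"
    unfolding eps_chain_def by blast
  have "0 < n" using c(1) by simp
  then have "\<bar>ff (xs 0) - xs (Suc 0)\<bar> < e" using c(4) by blast
  then have s: "xs 1 < hh r + e" using c(2) r by simp
  have "xs n < hh r + e"
    by (rule barrier_chain[OF r(1) e(1) e(2) c(4) s]) (use c in auto)
  then show False using c e by simp
qed

lemma chain3:
  assumes "0 \<le> x" "x \<le> 1" "0 \<le> t" "t \<le> 1" "0 \<le> y" "y \<le> 1"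
    "\<bar>ff x - t\<bar> < e" "\<bar>ff t - y\<bar> < e"
  shows "eps_chain ff e x y"
  unfolding eps_chain_def
proof (intro exI[of _ 2] exI[of _ "\<lambda>i::nat. if i = 0 then x else if i = 1 then t else y"] conjI)
  let ?xs = "\<lambda>i::nat. if i = 0 then x else if i = 1 then t else y"
  show "(2::nat) \<ge> 1" by simp
  show "?xs 0 = x" by simp
  show "?xs 2 = y" by simp
  show "\<forall>i\<le>2. ?xs i \<in> {0..1}" using assms by auto
  show "\<forall>i<2. \<bar>ff (?xs i) - ?xs (Suc i)\<bar> < e"
  proof (intro allI impI)
    fix i :: nat assume "i < 2"
    then have "i = 0 \<or> i = 1" by auto
    then show "\<bar>ff (?xs i) - ?xs (Suc i)\<bar> < e" using assms by auto
  qed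
qed

lemma refl_hh: "q \<in> Q0 \<Longrightarrow> chain_rel ff (hh q) (hh q)"
  unfolding chain_rel_def using chain3 hh_in ff_hh by (metis abs_0 diff_self)


lemma transit:
  assumes q: "q \<in> Q0" and q': "q' \<in> Q0" and lt: "q < q'" and e: "0 < e"
  shows "\<exists>t. 0 \<le> t \<and> t \<le> 1 \<and> \<bar>ff (hh q') - t\<bar> < e \<and> ff t = hh q"
proof -
  define \<delta> where "\<delta> = min e (wt q')"
  have dp: "0 < \<delta>" using e wt_pos[of q'] by (simp add: \<delta>_def)
  obtain b :: nat where b: "1 / \<delta> < real b" using reals_Archimedean2 by blast
  have bpos: "0 < real b" using b dp by (smt (verit) divide_pos_pos)
  define m where "m = prod_encode (to_nat q, b)"
  have mb: "b \<le> m" unfolding m_def by (rule le_prod_encode_2)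
  define d :: real where "d = 1 / (real m + 1/2)"
  have d0: "0 < d" by (simp add: d_def)
  have "d < 1 / real m" using bpos mb unfolding d_def
    by (intro divide_strict_left_mono) auto
  also have "\<dots> \<le> 1 / real b" using bpos mb by (intro divide_left_mono) auto
  also have "\<dots> < \<delta>" using b dp bpos by (simp add: field_simps)
  finally have dd: "d < \<delta>" .
  have fl: "nat \<lfloor>1/d\<rfloor> = m"
  proof -
    have "\<lfloor>1/d\<rfloor> = int m" unfolding d_def by (intro floor_unique) auto
    then show ?thesis by simp
  qed
  have selq: "sel q' d = q"
    using fl q lt by (simp add: sel_def m_def Let_def)
  define t where "t = hh q' + d"
  have g: "ingap q' t" using q' d0 dd by (simp add: ingap_def t_def \<delta>_def)
  have "ff t = hh q" using ff_gap[OF g] selq by (simp add: t_def)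
  moreover have "\<bar>ff (hh q') - t\<bar> < e" using ff_hh[OF q'] dd d0 by (simp add: t_def \<delta>_def)
  moreover have "0 \<le> t \<and> t \<le> 1" using hh_in[of q'] dd d0 wt_le[of q'] hh_le[of q']
    by (simp add: t_def \<delta>_def)
  ultimately show ?thesis by blast
qed

lemma down:
  assumes q: "q \<in> Q0" and q': "q' \<in> Q0" and lt: "q < q'"
  shows "chain_rel ff (hh q') (hh q)"
  unfolding chain_rel_def
proof (intro allI impI)
  fix e :: real assume e: "0 < e"
  obtain t where t: "0 \<le> t" "t \<le> 1" "\<bar>ff (hh q') - t\<bar> < e" "ff t = hh q"
    using transit[OF q q' lt e] by blast
  show "eps_chain ff e (hh q') (hh q)"
    by (rule chain3) (use t hh_in e in auto)
qed

lemma hh_rel_iff: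
  assumes q: "q \<in> Q0" and q': "q' \<in> Q0"
  shows "chain_rel ff (hh q') (hh q) \<longleftrightarrow> q \<le> q'"
  using refl_hh[OF q] down[OF q q'] no_up[OF q' q] by (cases q q' rule: linorder_cases) auto

lemma CR_eq: "chain_recurrent ff = hh ` Q0"
proof
  show "chain_recurrent ff \<subseteq> hh ` Q0"
    unfolding chain_recurrent_def using not_rec by fastforce
  show "hh ` Q0 \<subseteq> chain_recurrent ff"
    unfolding chain_recurrent_def using refl_hh hh_in by auto
qed

lemma class_eq:
  assumes q: "q \<in> Q0"
  shows "{y \<in> chain_recurrent ff. chain_equiv ff (hh q) y} = {hh q}"
proof
  show "{hh q} \<subseteq> {y \<in> chain_recurrent ff. chain_equiv ff (hh q) y}"
    using q CR_eq refl_hh by (auto simp: chain_equiv_def)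
  show "{y \<in> chain_recurrent ff. chain_equiv ff (hh q) y} \<subseteq> {hh q}"
  proof
    fix y assume "y \<in> {y \<in> chain_recurrent ff. chain_equiv ff (hh q) y}"
    then obtain q' where q': "q' \<in> Q0" "y = hh q'" "chain_equiv ff (hh q) (hh q')"
      using CR_eq by auto
    then have "q \<le> q'" "q' \<le> q" using hh_rel_iff q by (auto simp: chain_equiv_def)
    then show "y \<in> {hh q}" using q' by simp
  qed
qed

lemma comps_eq: "chain_components ff = (\<lambda>q. {hh q}) ` Q0"
proof -
  have "chain_components ff = (\<lambda>x. {y \<in> chain_recurrent ff. chain_equiv ff x y}) ` (hh ` Q0)"
    unfolding chain_components_def CR_eq[symmetric] ..
  also have "\<dots> = (\<lambda>q. {y \<in> chain_recurrent ff. chain_equiv ff (hh q) y}) ` Q0"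
    by (simp add: image_image)
  also have "\<dots> = (\<lambda>q. {hh q}) ` Q0" using class_eq by (intro image_cong) auto
  finally show ?thesis .
qed

theorem theorem3p2:
  shows "\<exists>f :: real \<Rightarrow> real. f ` {0..1} \<subseteq> {0..1} \<and>
    (\<exists>\<Phi> :: real set \<Rightarrow> rat.
       bij_betw \<Phi> (chain_components f) {q. 0 \<le> q \<and> q < 1} \<and>
       (\<forall>A\<in>chain_components f. \<forall>B\<in>chain_components f.
          comp_le f A B \<longleftrightarrow> \<Phi> A \<le> \<Phi> B))"
proof (intro exI conjI)
  show "ff ` {0..1} \<subseteq> {0..1}" using ff_range by auto
  let ?g = "\<lambda>q. {hh q}"
  have inj: "inj_on ?g Q0" using hh_inj by (auto simp: inj_on_def)
  have bg: "bij_betw ?g Q0 (chain_components ff)"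
    unfolding comps_eq using inj by (simp add: bij_betw_def)
  have inv: "\<And>q. q \<in> Q0 \<Longrightarrow> inv_into Q0 ?g {hh q} = q"
    using inv_into_f_f[OF inj] by blast
  show "bij_betw (inv_into Q0 ?g) (chain_components ff) {q. 0 \<le> q \<and> q < 1}"
    using bij_betw_inv_into[OF bg] by (simp add: Q0_def)
  show "\<forall>A\<in>chain_components ff. \<forall>B\<in>chain_components ff.
          comp_le ff A B \<longleftrightarrow> inv_into Q0 ?g A \<le> inv_into Q0 ?g B"
    unfolding comps_eq
  proof (intro ballI)
    fix A B assume "A \<in> ?g ` Q0" "B \<in> ?g ` Q0"
    then obtain a b where ab: "a \<in> Q0" "b \<in> Q0" "A = {hh a}" "B = {hh b}" by blast
    show "comp_le ff A B \<longleftrightarrow> inv_into Q0 ?g A \<le> inv_into Q0 ?g B"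
      using ab inv hh_rel_iff[of a b] by (simp add: comp_le_def)
  qed
qed

end
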